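(* Let $\mathbf{C}=\mathbf{C}_1\,\dot\cup\,\mathbf{C}_2$ and $\mathbf{B}\in\dot{\mathbb{P}}(\mathbb{L}(\mathbf{C}_1))$ with $|\mathbf{B}|=|\mathbf{C}_1|$. Suppose every variable in $\mathbf{C}_2$ has a positive monotonic effect on $D$ relative to $\mathbf{C}$, and $\mathbf{W}$ suffices to adjust for confounding of $\mathbf{C}$ on $D$. If for some $\mathbf{w}$ (all conditioning events having positive probability) $$E[D\mid\mathbf{B}=\mathbf{1},\mathbf{C}_2=\mathbf{0},\mathbf{W}=\mathbf{w}]-\sum_{L\in\mathbf{B}}E[D\mid\mathbf{B}\setminus\{L\}=\mathbf{1},L=0,\mathbf{C}_2=\mathbf{0},\mathbf{W}=\mathbf{w}]>0,$$ then $\mathbf{B}$ is a minimal sufficient cause of $D$ relative to $\mathbf{C}$ for some $\omega\in\Omega$.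
   Context: $\Omega$ is a population with a probability distribution; events are binary random variables; $\overline{X}=1-X$; $\mathbb{L}(\mathbf{C})=\mathbf{C}\cup\{\overline{X}:X\in\mathbf{C}\}$; $\dot{\mathbb{P}}(\mathbb{L}(\mathbf{C}))$ is the set of subsets of $\mathbb{L}(\mathbf{C})$ not containing both $X$ and $\overline{X}$; $(L)_{\mathbf{c}}$ is the value of literal $L$ under assignment $\mathbf{c}$; $\bigwedge(\mathbf{B})=\min_{L\in\mathbf{B}}L$. Potential outcomes $D_{\mathbf{c}}(\omega)\in\{0,1\}$; consistency $D(\omega)=D_{\mathbf{C}(\omega)}(\omega)$. Conditioning on $\{\mathbf{B}\setminus\{L\}=\mathbf{1},L=0\}$ means literal $L$ equals 0 and the other literals of $\mathbf{B}$ equal 1. $\mathbf{W}$ suffices to adjust for confounding of $\mathbf{C}$ on $D$ if $D_{\mathbf{c}}$ is independent of $\mathbf{C}$ given $\mathbf{W}=\mathbf{w}$, for all $\mathbf{c},\mathbf{w}$. A variable $X\in\mathbf{C}$ has a positive monotonic effect on $D$ relative to $\mathbf{C}$ if for all $\omega$ and all values of the other variables, the potential outcome with $X=1$ is $\ge$ that with $X=0$. $\mathbf{B}$ is a sufficient cause for $D$ relative to $\mathbf{C}$ for $\omega$ if some $\mathbf{c}^*$ has $(\bigwedge(\mathbf{B}))_{\mathbf{c}^*}=1$ and $D_{\mathbf{c}}(\omega)=1$ whenever $(\bigwedge(\mathbf{B}))_{\mathbf{c}}=1$; minimal if no proper subset is such a sufficient cause. *)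

theory Defs
  imports "HOL-Probability.Probability_Mass_Function"
begin

text \<open>Literals over variable names: Pos X stands for X, Neg X for its complement 1 - X.\<close>
datatype 'v lit = Pos 'v | Neg 'v

definition lits :: "'v set \<Rightarrow> 'v lit set" where
  "lits C = Pos ` C \<union> Neg ` C"

definition dot_pow_lits :: "'v set \<Rightarrow> 'v lit set set" where
  "dot_pow_lits C = {B. B \<subseteq> lits C \<and> (\<forall>x. \<not> (Pos x \<in> B \<and> Neg x \<in> B))}"

text \<open>Value of a literal under an assignment (binary values rendered as booleans).\<close>
fun lit_val :: "'v lit \<Rightarrow> ('v \<Rightarrow> bool) \<Rightarrow> bool" where
  "lit_val (Pos x) c = c x"
| "lit_val (Neg x) c = (\<not> c x)"

definition conj_lits :: "'v lit set \<Rightarrow> ('v \<Rightarrow> bool) \<Rightarrow> bool" where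
  "conj_lits B c = (\<forall>L\<in>B. lit_val L c)"

definition assignments :: "'v set \<Rightarrow> ('v \<Rightarrow> bool) set" where
  "assignments C = {c. \<forall>x. x \<notin> C \<longrightarrow> c x = False}"

definition obs :: "'v set \<Rightarrow> ('v \<Rightarrow> 'w \<Rightarrow> bool) \<Rightarrow> 'w \<Rightarrow> ('v \<Rightarrow> bool)" where
  "obs C Xv \<omega> = (\<lambda>x. if x \<in> C then Xv x \<omega> else False)"

text \<open>B is a sufficient cause for D relative to C for individual omega
  (Dpo c omega is the potential outcome D_c(omega)).\<close>
definition sufficient_cause ::
  "'v set \<Rightarrow> (('v \<Rightarrow> bool) \<Rightarrow> 'w \<Rightarrow> bool) \<Rightarrow> 'v lit set \<Rightarrow> 'w \<Rightarrow> bool" where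
  "sufficient_cause C Dpo B \<omega> =
     (B \<in> dot_pow_lits C \<and>
      (\<exists>c\<in>assignments C. conj_lits B c) \<and>
      (\<forall>c\<in>assignments C. conj_lits B c \<longrightarrow> Dpo c \<omega>))"

definition minimal_sufficient_cause ::
  "'v set \<Rightarrow> (('v \<Rightarrow> bool) \<Rightarrow> 'w \<Rightarrow> bool) \<Rightarrow> 'v lit set \<Rightarrow> 'w \<Rightarrow> bool" where
  "minimal_sufficient_cause C Dpo B \<omega> =
     (sufficient_cause C Dpo B \<omega> \<and> (\<forall>B'. B' \<subset> B \<longrightarrow> \<not> sufficient_cause C Dpo B' \<omega>))"

definition pos_monotonic ::
  "'v set \<Rightarrow> (('v \<Rightarrow> bool) \<Rightarrow> 'w \<Rightarrow> bool) \<Rightarrow> 'v \<Rightarrow> bool" where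
  "pos_monotonic C Dpo X =
     (\<forall>\<omega>. \<forall>c\<in>assignments C. Dpo (c(X := False)) \<omega> \<longrightarrow> Dpo (c(X := True)) \<omega>)"

text \<open>W suffices to adjust for confounding of C on D: for all c and w, the potential
  outcome D_c is independent of C given W = w (stated in product form).\<close>
definition suffices_adjust ::
  "'w pmf \<Rightarrow> 'v set \<Rightarrow> ('v \<Rightarrow> 'w \<Rightarrow> bool) \<Rightarrow> ('w \<Rightarrow> 'u) \<Rightarrow> (('v \<Rightarrow> bool) \<Rightarrow> 'w \<Rightarrow> bool) \<Rightarrow> bool" where
  "suffices_adjust p C Xv W Dpo =
     (\<forall>c\<in>assignments C. \<forall>w d c'.
        measure_pmf.prob p {\<omega>. Dpo c \<omega> = d \<and> obs C Xv \<omega> = c' \<and> W \<omega> = w}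
          * measure_pmf.prob p {\<omega>. W \<omega> = w}
        = measure_pmf.prob p {\<omega>. Dpo c \<omega> = d \<and> W \<omega> = w}
          * measure_pmf.prob p {\<omega>. obs C Xv \<omega> = c' \<and> W \<omega> = w})"

definition cond_exp :: "'w pmf \<Rightarrow> ('w \<Rightarrow> bool) \<Rightarrow> 'w set \<Rightarrow> real" where
  "cond_exp p D A = measure_pmf.prob p {\<omega>\<in>A. D \<omega>} / measure_pmf.prob p A"

end

theory Submission
  imports Defs
begin

fun var :: "'v lit \<Rightarrow> 'v" where
  "var (Pos x) = x" | "var (Neg x) = x"

theorem mainTheorem10:
  fixes p :: "'w pmf"
    and C C1 C2 :: "'v set"
    and Xv :: "'v \<Rightarrow> 'w \<Rightarrow> bool"
    and W :: "'w \<Rightarrow> 'u"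
    and D :: "'w \<Rightarrow> bool"
    and Dpo :: "('v \<Rightarrow> bool) \<Rightarrow> 'w \<Rightarrow> bool"
    and B :: "'v lit set"
    and w :: 'u
  assumes finC: "finite C"
    and C_split: "C = C1 \<union> C2" "C1 \<inter> C2 = {}"
    and B_in: "B \<in> dot_pow_lits C1"
    and B_card: "card B = card C1"
    and consistency: "\<And>\<omega>. D \<omega> = Dpo (obs C Xv \<omega>) \<omega>"
    and mono: "\<And>X. X \<in> C2 \<Longrightarrow> pos_monotonic C Dpo X"
    and adjust: "suffices_adjust p C Xv W Dpo"
    and pos_main: "measure_pmf.prob p
        {\<omega>. conj_lits B (obs C Xv \<omega>) \<and> (\<forall>x\<in>C2. \<not> Xv x \<omega>) \<and> W \<omega> = w} > 0"
    and pos_L: "\<And>L. L \<in> B \<Longrightarrow> measure_pmf.prob p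
        {\<omega>. conj_lits (B - {L}) (obs C Xv \<omega>) \<and> \<not> lit_val L (obs C Xv \<omega>)
             \<and> (\<forall>x\<in>C2. \<not> Xv x \<omega>) \<and> W \<omega> = w} > 0"
    and contrast: "cond_exp p D
        {\<omega>. conj_lits B (obs C Xv \<omega>) \<and> (\<forall>x\<in>C2. \<not> Xv x \<omega>) \<and> W \<omega> = w}
      - (\<Sum>L\<in>B. cond_exp p D
        {\<omega>. conj_lits (B - {L}) (obs C Xv \<omega>) \<and> \<not> lit_val L (obs C Xv \<omega>)
             \<and> (\<forall>x\<in>C2. \<not> Xv x \<omega>) \<and> W \<omega> = w}) > 0"
  shows "\<exists>\<omega>\<in>set_pmf p. minimal_sufficient_cause C Dpo B \<omega>"
proof -
  let ?P = "measure_pmf.prob p"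
  have finC1: "finite C1" using finC C_split by auto
  have Bsub: "B \<subseteq> lits C1" and Bnc: "\<And>x. \<not> (Pos x \<in> B \<and> Neg x \<in> B)"
    using B_in unfolding dot_pow_lits_def by auto
  have finB: "finite B"
    using Bsub finC1 unfolding lits_def by (meson finite_Un finite_imageI finite_subset)
  have varB: "var ` B \<subseteq> C1" using Bsub unfolding lits_def by auto
  have injB: "inj_on var B"
  proof (rule inj_onI)
    fix a b assume "a \<in> B" "b \<in> B" "var a = var b"
    then show "a = b" using Bnc by (cases a; cases b) auto
  qed
  have varB_eq: "var ` B = C1"
    using card_subset_eq[OF finC1 varB] card_image[OF injB] B_card by simp
  have cover: "\<And>x. x \<in> C1 \<Longrightarrow> Pos x \<in> B \<or> Neg x \<in> B"
  proof -
    fix x assume "x \<in> C1"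
    then obtain M where "M \<in> B" "var M = x" using varB_eq by force
    then show "Pos x \<in> B \<or> Neg x \<in> B" by (cases M) auto
  qed
  define cs where "cs = (\<lambda>x. x \<in> C1 \<and> Pos x \<in> B)"
  define cl where "cl = (\<lambda>L. cs(var L := \<not> cs (var L)))"
  have cs_as: "cs \<in> assignments C" unfolding assignments_def cs_def using C_split by auto
  have cl_as: "\<And>L. L \<in> B \<Longrightarrow> cl L \<in> assignments C"
    unfolding assignments_def cl_def cs_def using C_split varB by auto
  have key1: "\<And>c. c \<in> assignments C \<Longrightarrow>
      (conj_lits B c \<and> (\<forall>x\<in>C2. \<not> c x)) = (c = cs)"
  proof -
    fix c assume ca: "c \<in> assignments C"
    show "(conj_lits B c \<and> (\<forall>x\<in>C2. \<not> c x)) = (c = cs)"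
    proof
      assume h: "conj_lits B c \<and> (\<forall>x\<in>C2. \<not> c x)"
      show "c = cs"
      proof
        fix x
        show "c x = cs x"
        proof (cases "x \<in> C1")
          case True
          have hb: "\<forall>L\<in>B. lit_val L c" using h by (simp add: conj_lits_def)
          show ?thesis
          proof (cases "Pos x \<in> B")
            case T: True
            then have "c x" using hb by force
            then show ?thesis using T True by (simp add: cs_def)
          next
            case F: False
            then have "Neg x \<in> B" using cover[OF True] by blast
            then have "\<not> c x" using hb by force
            then show ?thesis using F by (simp add: cs_def)
          qed
        next
          case False
          then show ?thesis using h ca C_split unfolding cs_def assignments_def by auto
        qed
      qed
    next
      assume "c = cs"
      then show "conj_lits B c \<and> (\<forall>x\<in>C2. \<not> c x)"
        unfolding conj_lits_def cs_def using Bsub Bnc C_split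
        apply (auto simp: lits_def)
        apply (case_tac L; auto)
        done
    qed
  qed
  have key2: "\<And>c L. c \<in> assignments C \<Longrightarrow> L \<in> B \<Longrightarrow>
      (conj_lits (B - {L}) c \<and> \<not> lit_val L c \<and> (\<forall>x\<in>C2. \<not> c x)) = (c = cl L)"
  proof -
    fix c L assume ca: "c \<in> assignments C" and LB: "L \<in> B"
    have vL: "var L \<in> C1" using LB varB by auto
    show "(conj_lits (B - {L}) c \<and> \<not> lit_val L c \<and> (\<forall>x\<in>C2. \<not> c x)) = (c = cl L)"
    proof
      assume h: "conj_lits (B - {L}) c \<and> \<not> lit_val L c \<and> (\<forall>x\<in>C2. \<not> c x)"
      show "c = cl L"
      proof
        fix x
        show "c x = cl L x"
        proof (cases "x = var L")
          case True
          then show ?thesis using h LB Bnc vL unfolding cl_def cs_def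
            by (cases L) auto
        next
          case nx: False
          show ?thesis
          proof (cases "x \<in> C1")
            case True
            have "Pos x \<noteq> L" "Neg x \<noteq> L" using nx by auto
            have hb: "\<forall>M\<in>B - {L}. lit_val M c" using h by (simp add: conj_lits_def)
            have clx: "cl L x = cs x" using nx by (simp add: cl_def)
            show ?thesis
            proof (cases "Pos x \<in> B")
              case T: True
              then have "c x" using hb \<open>Pos x \<noteq> L\<close> by force
              then show ?thesis using T True clx by (simp add: cs_def)
            next
              case F: False
              then have "Neg x \<in> B" using cover[OF True] by blast
              then have "\<not> c x" using hb \<open>Neg x \<noteq> L\<close> by force
              then show ?thesis using F clx by (simp add: cs_def)
            qed
          next
            case False
            then show ?thesis using nx h ca C_split unfolding cl_def cs_def assignments_def by auto
          qed
        qed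
      qed
    next
      assume ceq: "c = cl L"
      have a: "conj_lits (B - {L}) c"
        unfolding conj_lits_def
      proof
        fix M assume M: "M \<in> B - {L}"
        then have "var M \<noteq> var L" using injB LB by (metis DiffE inj_on_contraD singletonI)
        then show "lit_val M c" using M Bnc Bsub ceq unfolding cl_def cs_def
          by (cases M) (auto simp: lits_def)
      qed
      have b: "\<not> lit_val L c" using ceq LB Bnc vL unfolding cl_def cs_def by (cases L) auto
      have d: "\<forall>x\<in>C2. \<not> c x" using ceq C_split vL unfolding cl_def cs_def by auto
      show "conj_lits (B - {L}) c \<and> \<not> lit_val L c \<and> (\<forall>x\<in>C2. \<not> c x)" using a b d by blast
    qed
  qed
  have obs_as: "\<And>\<omega>. obs C Xv \<omega> \<in> assignments C" unfolding obs_def assignments_def by auto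
  have obsC2: "\<And>\<omega>. (\<forall>x\<in>C2. \<not> Xv x \<omega>) = (\<forall>x\<in>C2. \<not> obs C Xv \<omega> x)"
    unfolding obs_def using C_split by auto
  have setM: "{\<omega>. conj_lits B (obs C Xv \<omega>) \<and> (\<forall>x\<in>C2. \<not> Xv x \<omega>) \<and> W \<omega> = w}
      = {\<omega>. obs C Xv \<omega> = cs \<and> W \<omega> = w}"
    using key1[OF obs_as] obsC2 by blast
  have setL: "\<And>L. L \<in> B \<Longrightarrow> {\<omega>. conj_lits (B - {L}) (obs C Xv \<omega>) \<and> \<not> lit_val L (obs C Xv \<omega>)
             \<and> (\<forall>x\<in>C2. \<not> Xv x \<omega>) \<and> W \<omega> = w} = {\<omega>. obs C Xv \<omega> = cl L \<and> W \<omega> = w}"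
    using key2[OF obs_as] obsC2 by blast
  define f where "f = (\<lambda>c. ?P {\<omega>. Dpo c \<omega> \<and> W \<omega> = w})"
  define q where "q = ?P {\<omega>. W \<omega> = w}"
  have qpos: "q > 0"
  proof -
    have "?P {\<omega>. obs C Xv \<omega> = cs \<and> W \<omega> = w} \<le> q"
      unfolding q_def by (rule measure_pmf.finite_measure_mono) auto
    then show ?thesis using pos_main setM by simp
  qed
  have ce: "\<And>c. c \<in> assignments C \<Longrightarrow> ?P {\<omega>. obs C Xv \<omega> = c \<and> W \<omega> = w} > 0 \<Longrightarrow>
      cond_exp p D {\<omega>. obs C Xv \<omega> = c \<and> W \<omega> = w} = f c / q"
  proof -
    fix c assume ca: "c \<in> assignments C" and pc: "?P {\<omega>. obs C Xv \<omega> = c \<and> W \<omega> = w} > 0"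
    have e1: "{\<omega> \<in> {\<omega>. obs C Xv \<omega> = c \<and> W \<omega> = w}. D \<omega>}
        = {\<omega>. Dpo c \<omega> = True \<and> obs C Xv \<omega> = c \<and> W \<omega> = w}"
      using consistency by auto
    have e2: "{\<omega>. Dpo c \<omega> = True \<and> W \<omega> = w} = {\<omega>. Dpo c \<omega> \<and> W \<omega> = w}" by simp
    have adj: "?P {\<omega>. Dpo c \<omega> = True \<and> obs C Xv \<omega> = c \<and> W \<omega> = w} * q
        = f c * ?P {\<omega>. obs C Xv \<omega> = c \<and> W \<omega> = w}"
      using adjust ca unfolding suffices_adjust_def f_def q_def e2[symmetric] by blast
    show "cond_exp p D {\<omega>. obs C Xv \<omega> = c \<and> W \<omega> = w} = f c / q"
      unfolding cond_exp_def e1 using adj qpos pc by (simp add: field_simps)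
  qed
  have ceM: "cond_exp p D {\<omega>. conj_lits B (obs C Xv \<omega>) \<and> (\<forall>x\<in>C2. \<not> Xv x \<omega>) \<and> W \<omega> = w} = f cs / q"
    using ce[OF cs_as] pos_main setM by simp
  have ceL: "\<And>L. L \<in> B \<Longrightarrow> cond_exp p D {\<omega>. conj_lits (B - {L}) (obs C Xv \<omega>) \<and> \<not> lit_val L (obs C Xv \<omega>)
             \<and> (\<forall>x\<in>C2. \<not> Xv x \<omega>) \<and> W \<omega> = w} = f (cl L) / q"
    using ce[OF cl_as] pos_L setL by simp
  have "f cs / q - (\<Sum>L\<in>B. f (cl L) / q) > 0"
    using contrast ceM ceL by (simp cong: sum.cong)
  then have gt: "f cs > (\<Sum>L\<in>B. f (cl L))"
    using qpos by (simp add: sum_divide_distrib[symmetric] field_simps)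
  have ex: "\<exists>\<omega>\<in>set_pmf p. Dpo cs \<omega> \<and> (\<forall>L\<in>B. \<not> Dpo (cl L) \<omega>)"
  proof (rule ccontr)
    assume "\<not> ?thesis"
    then have sub: "{\<omega>. Dpo cs \<omega> \<and> W \<omega> = w} \<inter> set_pmf p \<subseteq> (\<Union>L\<in>B. {\<omega>. Dpo (cl L) \<omega> \<and> W \<omega> = w})"
      by blast
    have "f cs = ?P ({\<omega>. Dpo cs \<omega> \<and> W \<omega> = w} \<inter> set_pmf p)"
      unfolding f_def by (simp add: measure_Int_set_pmf)
    also have "\<dots> \<le> ?P (\<Union>L\<in>B. {\<omega>. Dpo (cl L) \<omega> \<and> W \<omega> = w})"
      by (rule measure_pmf.finite_measure_mono[OF sub]) auto
    also have "\<dots> \<le> (\<Sum>L\<in>B. f (cl L))"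
      unfolding f_def by (rule measure_pmf.finite_measure_subadditive_finite[OF finB]) auto
    finally show False using gt by simp
  qed
  then obtain \<omega> where om: "\<omega> \<in> set_pmf p" "Dpo cs \<omega>" "\<And>L. L \<in> B \<Longrightarrow> \<not> Dpo (cl L) \<omega>" by blast
  have monoS: "\<And>S. finite S \<Longrightarrow> S \<subseteq> C2 \<Longrightarrow> Dpo (\<lambda>y. cs y \<or> y \<in> S) \<omega>"
  proof -
    fix S :: "'v set"
    assume "finite S" "S \<subseteq> C2"
    then show "Dpo (\<lambda>y. cs y \<or> y \<in> S) \<omega>"
    proof (induction S rule: finite_induct)
      case empty
      then show ?case using om by simp
    next
      case (insert x S)
      let ?g = "\<lambda>y. cs y \<or> y \<in> S"
      have xC2: "x \<in> C2" using insert by auto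
      have csx: "\<not> cs x" using xC2 C_split unfolding cs_def by auto
      have gas: "?g \<in> assignments C" using insert cs_as C_split unfolding assignments_def by auto
      have "?g(x := False) = ?g" using insert csx by (auto simp: fun_eq_iff)
      moreover have "?g(x := True) = (\<lambda>y. cs y \<or> y \<in> insert x S)" by (auto simp: fun_eq_iff)
      moreover have "\<forall>c\<in>assignments C. Dpo (c(x:=False)) \<omega> \<longrightarrow> Dpo (c(x:=True)) \<omega>"
        using mono[OF xC2] unfolding pos_monotonic_def by blast
      then have "Dpo (?g(x:=False)) \<omega> \<longrightarrow> Dpo (?g(x:=True)) \<omega>" using gas by blast
      moreover have "Dpo ?g \<omega>" using insert by blast
      ultimately show ?case by simp
    qed
  qed
  have suff: "sufficient_cause C Dpo B \<omega>"
    unfolding sufficient_cause_def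
  proof (intro conjI)
    show "B \<in> dot_pow_lits C" using B_in C_split unfolding dot_pow_lits_def lits_def by auto
    show "\<exists>c\<in>assignments C. conj_lits B c" using key1[OF cs_as] cs_as by blast
    show "\<forall>c\<in>assignments C. conj_lits B c \<longrightarrow> Dpo c \<omega>"
    proof (intro ballI impI)
      fix c assume ca: "c \<in> assignments C" and cb: "conj_lits B c"
      define c' where "c' = (\<lambda>x. if x \<in> C2 then False else c x)"
      have c'a: "c' \<in> assignments C" using ca unfolding c'_def assignments_def by auto
      have lv: "lit_val M c' = lit_val M c" if "M \<in> B" for M
      proof -
        have "var M \<notin> C2" using that varB C_split by auto
        then show ?thesis unfolding c'_def by (cases M) auto
      qed
      have "conj_lits B c'"
        using cb lv unfolding conj_lits_def by auto
      then have "c' = cs" using key1[OF c'a] unfolding c'_def by auto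
      have "c = (\<lambda>y. cs y \<or> y \<in> {x\<in>C2. c x})"
      proof
        fix y
        show "c y = (cs y \<or> y \<in> {x\<in>C2. c x})"
        proof (cases "y \<in> C2")
          case True
          then have "\<not> cs y" using C_split by (auto simp: cs_def)
          then show ?thesis using True by simp
        next
          case False
          then have "c y = c' y" by (simp add: c'_def)
          then show ?thesis using \<open>c' = cs\<close> False by simp
        qed
      qed
      moreover have "finite {x\<in>C2. c x}" using finC C_split by auto
      ultimately show "Dpo c \<omega>" using monoS[of "{x\<in>C2. c x}"] by auto
    qed
  qed
  have "minimal_sufficient_cause C Dpo B \<omega>"
    unfolding minimal_sufficient_cause_def
  proof (intro conjI allI impI suff)
    fix B' assume B'B: "B' \<subset> B"
    then obtain L where L: "L \<in> B" "L \<notin> B'" by blast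
    show "\<not> sufficient_cause C Dpo B' \<omega>"
    proof
      assume "sufficient_cause C Dpo B' \<omega>"
      then have h: "\<forall>c\<in>assignments C. conj_lits B' c \<longrightarrow> Dpo c \<omega>"
        unfolding sufficient_cause_def by blast
      have "conj_lits (B - {L}) (cl L)" using key2[OF cl_as[OF L(1)] L(1)] by simp
      then have "conj_lits B' (cl L)" using B'B L unfolding conj_lits_def by blast
      then show False using h cl_as[OF L(1)] om(3)[OF L(1)] by blast
    qed
  qed
  then show ?thesis using om(1) by blast
qed

end
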